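(* For all $n \ge 3$, $\gamma(n) \le 4n - 10$.
   Context: A red-blue colouring of the edges of a complete tripartite graph is good if no two monochromatic triangles share an edge. $\gamma(n)$ is the maximum number of monochromatic triangles in a good red-blue colouring of a complete tripartite graph on $n$ vertices. *)

theory Defs
  imports Main
begin

text \<open>A complete tripartite graph on the vertex set {0..<n}: three nonempty,
pairwise disjoint parts covering the vertex set; edges are exactly the pairs
of vertices in different parts.\<close>
definition tripartition :: "nat \<Rightarrow> nat set \<Rightarrow> nat set \<Rightarrow> nat set \<Rightarrow> bool" where
  "tripartition n A B C \<longleftrightarrow>
     A \<union> B \<union> C = {0..<n} \<and> A \<inter> B = {} \<and> B \<inter> C = {} \<and> A \<inter> C = {} \<and>
     A \<noteq> {} \<and> B \<noteq> {} \<and> C \<noteq> {}"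

text \<open>A red-blue colouring assigns to each edge (a two-element vertex set) a
colour (True = red, False = blue).\<close>
definition mono_triangles :: "nat set \<Rightarrow> nat set \<Rightarrow> nat set \<Rightarrow> (nat set \<Rightarrow> bool) \<Rightarrow> nat set set" where
  "mono_triangles A B C col =
     {{a, b, c} | a b c. a \<in> A \<and> b \<in> B \<and> c \<in> C \<and>
        col {a, b} = col {b, c} \<and> col {b, c} = col {a, c}}"

definition good_colouring :: "nat set \<Rightarrow> nat set \<Rightarrow> nat set \<Rightarrow> (nat set \<Rightarrow> bool) \<Rightarrow> bool" where
  "good_colouring A B C col \<longleftrightarrow>
     (\<forall>T1 \<in> mono_triangles A B C col. \<forall>T2 \<in> mono_triangles A B C col.
        T1 \<noteq> T2 \<longrightarrow> \<not> (\<exists>e. e \<subseteq> T1 \<and> e \<subseteq> T2 \<and> card e = 2))"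

definition gamma :: "nat \<Rightarrow> nat" where
  "gamma n = Max {card (mono_triangles A B C col) | A B C col.
                    tripartition n A B C \<and> good_colouring A B C col}"

end

theory Submission
  imports Defs
begin

definition MT :: "nat set \<Rightarrow> nat set \<Rightarrow> nat set \<Rightarrow> (nat set \<Rightarrow> bool) \<Rightarrow> bool \<Rightarrow> nat set set" where
  "MT A B C col g = {{a, b, c} | a b c. a \<in> A \<and> b \<in> B \<and> c \<in> C \<and>
        col {a, b} = g \<and> col {b, c} = g \<and> col {a, c} = g}"

definition gd :: "nat set \<Rightarrow> nat set \<Rightarrow> nat set \<Rightarrow> (nat set \<Rightarrow> bool) \<Rightarrow> bool" where
  "gd A B C col \<longleftrightarrow> A \<inter> B = {} \<and> B \<inter> C = {} \<and> A \<inter> C = {} \<and> good_colouring A B C col"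

lemma mono_eq: "mono_triangles A B C col = MT A B C col True \<union> MT A B C col False"
  unfolding mono_triangles_def MT_def
  apply (rule set_eqI)
  apply (rule iffI)
   apply (elim CollectE exE conjE)
   apply (case_tac "col {a, b}")
    apply blast
   apply blast
  apply blast
  done

lemma mono_perm1: "mono_triangles A B C col = mono_triangles B A C col"
  unfolding mono_triangles_def
  apply (rule set_eqI)
  apply (rule iffI)
   apply (elim CollectE exE conjE)
   apply (rule CollectI)
   apply (rule_tac x=b in exI, rule_tac x=a in exI, rule_tac x=c in exI)
   apply (simp add: insert_commute)
   apply (elim CollectE exE conjE)
   apply (rule CollectI)
   apply (rule_tac x=b in exI, rule_tac x=a in exI, rule_tac x=c in exI)
  apply (simp add: insert_commute)
  done

lemma mono_perm2: "mono_triangles A B C col = mono_triangles A C B col"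
  unfolding mono_triangles_def
  apply (rule set_eqI)
  apply (rule iffI)
   apply (elim CollectE exE conjE)
   apply (rule CollectI)
   apply (rule_tac x=a in exI, rule_tac x=c in exI, rule_tac x=b in exI)
   apply (simp add: insert_commute)
   apply (elim CollectE exE conjE)
   apply (rule CollectI)
   apply (rule_tac x=a in exI, rule_tac x=c in exI, rule_tac x=b in exI)
  apply (simp add: insert_commute)
  done

lemma MT_perm1: "MT A B C col g = MT B A C col g"
  unfolding MT_def
  apply (rule set_eqI)
  apply (rule iffI)
   apply (elim CollectE exE conjE)
   apply (rule CollectI)
   apply (rule_tac x=b in exI, rule_tac x=a in exI, rule_tac x=c in exI)
   apply (simp add: insert_commute)
   apply (elim CollectE exE conjE)
   apply (rule CollectI)
   apply (rule_tac x=b in exI, rule_tac x=a in exI, rule_tac x=c in exI)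
  apply (simp add: insert_commute)
  done

lemma MT_perm2: "MT A B C col g = MT A C B col g"
  unfolding MT_def
  apply (rule set_eqI)
  apply (rule iffI)
   apply (elim CollectE exE conjE)
   apply (rule CollectI)
   apply (rule_tac x=a in exI, rule_tac x=c in exI, rule_tac x=b in exI)
   apply (simp add: insert_commute)
   apply (elim CollectE exE conjE)
   apply (rule CollectI)
   apply (rule_tac x=a in exI, rule_tac x=c in exI, rule_tac x=b in exI)
  apply (simp add: insert_commute)
  done

lemma gd_perm1: "gd A B C col \<Longrightarrow> gd B A C col"
  unfolding gd_def good_colouring_def using mono_perm1[of A B C col] by auto

lemma gd_perm2: "gd A B C col \<Longrightarrow> gd A C B col"
  unfolding gd_def good_colouring_def using mono_perm2[of A B C col] by auto

lemma col_sym: "col {x, y} = col {y, x}"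
  by (simp add: insert_commute)

lemma S:
  assumes "gd X Y Z col" "x \<in> X" "y \<in> Y" "z \<in> Z" "z' \<in> Z" "z \<noteq> z'"
    "col {x, y} = h" "col {x, z} = h" "col {y, z} = h" "col {x, z'} = h" "col {y, z'} = h"
  shows False
proof -
  have d: "X \<inter> Y = {}" "Y \<inter> Z = {}" "X \<inter> Z = {}" and g: "good_colouring X Y Z col"
    using assms(1) unfolding gd_def by auto
  have T1: "{x, y, z} \<in> mono_triangles X Y Z col"
    unfolding mono_triangles_def
    apply (rule CollectI, rule exI[of _ x], rule exI[of _ y], rule exI[of _ z])
    using assms(2-4,7-9) by simp
  have T2: "{x, y, z'} \<in> mono_triangles X Y Z col"
    unfolding mono_triangles_def
    apply (rule CollectI, rule exI[of _ x], rule exI[of _ y], rule exI[of _ z'])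
    using assms(2,3,5,7,10,11) by simp
  have a1: "z \<noteq> x" using assms(2,4) d(3) by auto
  have a2: "z \<noteq> y" using assms(3,4) d(2) by auto
  have ne: "{x, y, z} \<noteq> {x, y, z'}"
    proof
      assume "{x, y, z} = {x, y, z'}"
      then have "z \<in> {x, y, z'}" by (metis insertCI)
      then show False using a1 a2 assms(6) by simp
    qed
  have xy: "x \<noteq> y" using assms(2,3) d(1) by auto
  have e: "{x, y} \<subseteq> {x, y, z}" "{x, y} \<subseteq> {x, y, z'}" "card {x, y} = 2"
    using xy by auto
  have "\<not> (\<exists>e. e \<subseteq> {x, y, z} \<and> e \<subseteq> {x, y, z'} \<and> card e = 2)"
    using g[unfolded good_colouring_def, rule_format, OF T1 T2 ne] .
  then show False using e by blast
qed


lemma tri_at: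
  assumes "gd X Y Z col" "v \<in> X" "T \<in> MT X Y Z col g" "v \<in> T"
  shows "\<exists>y z. y \<in> Y \<and> z \<in> Z \<and> T = {v, y, z} \<and> col {v, y} = g \<and> col {y, z} = g \<and> col {v, z} = g"
proof -
  from assms(3) obtain a b c where T: "T = {a, b, c}" "a \<in> X" "b \<in> Y" "c \<in> Z"
    "col {a, b} = g" "col {b, c} = g" "col {a, c} = g"
    unfolding MT_def by blast
  have d: "X \<inter> Y = {}" "X \<inter> Z = {}" using assms(1) unfolding gd_def by auto
  have "v \<noteq> b" using d(1) assms(2) T(3) by auto
  moreover have "v \<noteq> c" using d(2) assms(2) T(4) by auto
  ultimately have "v = a" using assms(4) T(1) by auto
  then show ?thesis using T by blast
qed

lemma dp:
  assumes gd: "gd X Y Z col" and v: "v \<in> X" and yz: "y \<in> Y" "y' \<in> Y" "z \<in> Z" "z' \<in> Z"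
    and ne: "{v, y, z} \<noteq> {v, y', z'}"
    and c1: "col {v, y} = g" "col {y, z} = g" "col {v, z} = g"
    and c2: "col {v, y'} = g" "col {y', z'} = g" "col {v, z'} = g"
  shows "y \<noteq> y' \<and> z \<noteq> z'"
proof (intro conjI notI)
  assume e: "y = y'"
  then have "z \<noteq> z'" using ne by auto
  show False
    by (rule S[OF gd v yz(1) yz(3) yz(4) \<open>z \<noteq> z'\<close>, of g]) (use c1 c2 e in auto)
next
  assume e: "z = z'"
  then have "y \<noteq> y'" using ne by auto
  have gd2: "gd X Z Y col" using gd by (rule gd_perm2)
  show False
    by (rule S[OF gd2 v yz(3) yz(1) yz(2) \<open>y \<noteq> y'\<close>, of g]) (use c1 c2 e in \<open>auto simp: insert_commute\<close>)
qed

lemma TL: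
  assumes gd: "gd X Y Z col" and v: "v \<in> X" "w \<in> X" "w \<noteq> v"
    and p: "p1 \<in> Y" "p2 \<in> Y" "p3 \<in> Y" "p1 \<noteq> p2" "p1 \<noteq> p3" "p2 \<noteq> p3"
    and q: "q1 \<in> Z" "q2 \<in> Z" "q3 \<in> Z" "q1 \<noteq> q2" "q1 \<noteq> q3" "q2 \<noteq> q3"
    and t1: "col {v, p1} = g" "col {p1, q1} = g" "col {v, q1} = g"
    and t2: "col {v, p2} = g" "col {p2, q2} = g" "col {v, q2} = g"
    and t3: "col {v, p3} = g" "col {p3, q3} = g" "col {v, q3} = g"
  shows "(col {w, p1} = g \<and> col {w, p2} = g \<and> col {w, p3} = g) \<or>
         (col {w, q1} = g \<and> col {w, q2} = g \<and> col {w, q3} = g)"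
proof -
  have gXZY: "gd X Z Y col" using gd by (rule gd_perm2)
  have gYZX: "gd Y Z X col" using gd_perm2[OF gd_perm1[OF gd]] .
  have O: "col {p, q} = (\<not> g)" if "p \<in> Y" "q \<in> Z" "q' \<in> Z" "q \<noteq> q'" "col {v, p} = g"
      "col {v, q} = g" "col {v, q'} = g" "col {p, q'} = g" for p q q'
  proof (cases "col {p, q} = g")
    case True
    have False by (rule S[OF gd v(1) that(1) that(2) that(3) that(4), of g]) (use that True in auto)
    then show ?thesis ..
  next
    case False
    then show ?thesis by auto
  qed
  have D: "\<not> (col {w, p} = g \<and> col {w, q} = g)" if "p \<in> Y" "q \<in> Z"
      "col {v, p} = g" "col {p, q} = g" "col {v, q} = g" for p q
  proof
    assume h: "col {w, p} = g \<and> col {w, q} = g"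
    show False
      by (rule S[OF gYZX that(1) that(2) v(2) v(1) v(3), of g]) (use that h in \<open>auto simp: insert_commute\<close>)
  qed
  have Sp: "\<not> (col {w, p} \<noteq> g \<and> col {w, q} \<noteq> g \<and> col {w, q'} \<noteq> g)"
    if "p \<in> Y" "q \<in> Z" "q' \<in> Z" "q \<noteq> q'" "col {p, q} = (\<not> g)" "col {p, q'} = (\<not> g)" for p q q'
  proof
    assume h: "col {w, p} \<noteq> g \<and> col {w, q} \<noteq> g \<and> col {w, q'} \<noteq> g"
    show False
      by (rule S[OF gd v(2) that(1) that(2) that(3) that(4), of "\<not> g"]) (use that h in auto)
  qed
  have Sq: "\<not> (col {w, q} \<noteq> g \<and> col {w, p} \<noteq> g \<and> col {w, p'} \<noteq> g)"
    if "q \<in> Z" "p \<in> Y" "p' \<in> Y" "p \<noteq> p'" "col {p, q} = (\<not> g)" "col {p', q} = (\<not> g)" for q p p'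
  proof
    assume h: "col {w, q} \<noteq> g \<and> col {w, p} \<noteq> g \<and> col {w, p'} \<noteq> g"
    show False
      by (rule S[OF gXZY v(2) that(1) that(2) that(3) that(4), of "\<not> g"]) (use that h in \<open>auto simp: insert_commute\<close>)
  qed
  have O12: "col {p1, q2} = (\<not> g)" by (rule O[of p1 q2 q1]) (use p q t1 t2 in auto)
  have O13: "col {p1, q3} = (\<not> g)" by (rule O[of p1 q3 q1]) (use p q t1 t3 in auto)
  have O21: "col {p2, q1} = (\<not> g)" by (rule O[of p2 q1 q2]) (use p q t1 t2 in auto)
  have O23: "col {p2, q3} = (\<not> g)" by (rule O[of p2 q3 q2]) (use p q t2 t3 in auto)
  have O31: "col {p3, q1} = (\<not> g)" by (rule O[of p3 q1 q3]) (use p q t1 t3 in auto)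
  have O32: "col {p3, q2} = (\<not> g)" by (rule O[of p3 q2 q3]) (use p q t2 t3 in auto)
  have D1: "\<not> (col {w, p1} = g \<and> col {w, q1} = g)" by (rule D) (use p q t1 in auto)
  have D2: "\<not> (col {w, p2} = g \<and> col {w, q2} = g)" by (rule D) (use p q t2 in auto)
  have D3: "\<not> (col {w, p3} = g \<and> col {w, q3} = g)" by (rule D) (use p q t3 in auto)
  have Sp1: "\<not> (col {w, p1} \<noteq> g \<and> col {w, q2} \<noteq> g \<and> col {w, q3} \<noteq> g)"
    by (rule Sp) (use p q O12 O13 in auto)
  have Sp2: "\<not> (col {w, p2} \<noteq> g \<and> col {w, q1} \<noteq> g \<and> col {w, q3} \<noteq> g)"
    by (rule Sp) (use p q O21 O23 in auto)
  have Sp3: "\<not> (col {w, p3} \<noteq> g \<and> col {w, q1} \<noteq> g \<and> col {w, q2} \<noteq> g)"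
    by (rule Sp) (use p q O31 O32 in auto)
  have Sq1: "\<not> (col {w, q1} \<noteq> g \<and> col {w, p2} \<noteq> g \<and> col {w, p3} \<noteq> g)"
    by (rule Sq) (use p q O21 O31 in auto)
  have Sq2: "\<not> (col {w, q2} \<noteq> g \<and> col {w, p1} \<noteq> g \<and> col {w, p3} \<noteq> g)"
    by (rule Sq) (use p q O12 O32 in auto)
  have Sq3: "\<not> (col {w, q3} \<noteq> g \<and> col {w, p1} \<noteq> g \<and> col {w, p2} \<noteq> g)"
    by (rule Sq) (use p q O13 O23 in auto)
  show ?thesis using D1 D2 D3 Sp1 Sp2 Sp3 Sq1 Sq2 Sq3 by blast
qed


lemma card3':
  assumes "3 \<le> card S" "t \<in> S"
  shows "\<exists>x y. x \<in> S \<and> y \<in> S \<and> x \<noteq> t \<and> y \<noteq> t \<and> x \<noteq> y"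
proof -
  have fin: "finite S" using assms(1) card.infinite by fastforce
  have "card (S - {t}) \<ge> 2" using assms fin by (simp add: card_Diff_singleton)
  then obtain x where x: "x \<in> S - {t}"
    by (metis card.empty not_numeral_le_zero equals0I)
  have "card (S - {t} - {x}) \<ge> 1" using \<open>card (S - {t}) \<ge> 2\<close> x fin
    by (simp add: card_Diff_singleton)
  then obtain y where y: "y \<in> S - {t} - {x}"
    by (metis card.empty not_one_le_zero equals0I)
  show ?thesis using x y by blast
qed

lemma card3:
  assumes "3 \<le> card S"
  shows "\<exists>x y z. x \<in> S \<and> y \<in> S \<and> z \<in> S \<and> x \<noteq> y \<and> x \<noteq> z \<and> y \<noteq> z"
proof -
  have "S \<noteq> {}" using assms by auto
  then obtain t where "t \<in> S" by blast
  then show ?thesis using card3'[OF assms] by metis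
qed

lemma MT_perm3: "MT A B C col g = MT C A B col g"
  using MT_perm1 MT_perm2 by metis

lemma gd_perm3: "gd A B C col \<Longrightarrow> gd C A B col"
  using gd_perm1 gd_perm2 by metis

lemma core:
  assumes gd: "gd A B C col" and a: "a \<in> A"
    and all: "\<And>v. v \<in> A \<union> B \<union> C \<Longrightarrow> 3 \<le> card {T \<in> MT A B C col g. v \<in> T}"
  shows False
proof -
  have gBAC: "gd B A C col" using gd by (rule gd_perm1)
  have gCAB: "gd C A B col" using gd by (rule gd_perm3)
  have gBCA: "gd B C A col" using gd_perm2[OF gBAC] .
  have gACB: "gd A C B col" using gd by (rule gd_perm2)
  obtain T1 T2 T3 where T: "T1 \<in> {T \<in> MT A B C col g. a \<in> T}" "T2 \<in> {T \<in> MT A B C col g. a \<in> T}"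
      "T3 \<in> {T \<in> MT A B C col g. a \<in> T}" "T1 \<noteq> T2" "T1 \<noteq> T3" "T2 \<noteq> T3"
    using card3[OF all[of a]] a by blast
  obtain b1 c1 where B1: "b1 \<in> B" "c1 \<in> C" "T1 = {a, b1, c1}" "col {a, b1} = g" "col {b1, c1} = g" "col {a, c1} = g"
    using tri_at[OF gd a, of T1] T(1) by blast
  obtain b2 c2 where B2: "b2 \<in> B" "c2 \<in> C" "T2 = {a, b2, c2}" "col {a, b2} = g" "col {b2, c2} = g" "col {a, c2} = g"
    using tri_at[OF gd a, of T2] T(2) by blast
  obtain b3 c3 where B3: "b3 \<in> B" "c3 \<in> C" "T3 = {a, b3, c3}" "col {a, b3} = g" "col {b3, c3} = g" "col {a, c3} = g"
    using tri_at[OF gd a, of T3] T(3) by blast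
  have d12: "b1 \<noteq> b2 \<and> c1 \<noteq> c2"
    by (rule dp[OF gd a B1(1) B2(1) B1(2) B2(2)]) (use B1 B2 T in auto)
  have d13: "b1 \<noteq> b3 \<and> c1 \<noteq> c3"
    by (rule dp[OF gd a B1(1) B3(1) B1(2) B3(2)]) (use B1 B3 T in auto)
  have d23: "b2 \<noteq> b3 \<and> c2 \<noteq> c3"
    by (rule dp[OF gd a B2(1) B3(1) B2(2) B3(2)]) (use B2 B3 T in auto)
  have T1c: "T1 \<in> {T \<in> MT A B C col g. c1 \<in> T}" using T(1) B1 by auto
  obtain U2 U3 where U: "U2 \<in> {T \<in> MT A B C col g. c1 \<in> T}" "U3 \<in> {T \<in> MT A B C col g. c1 \<in> T}"
      "U2 \<noteq> T1" "U3 \<noteq> T1" "U2 \<noteq> U3"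
    using card3'[OF all[of c1] T1c] B1(2) by blast
  have U2': "U2 \<in> MT C A B col g" "c1 \<in> U2" using U(1) MT_perm3[of A B C col g] by auto
  have U3': "U3 \<in> MT C A B col g" "c1 \<in> U3" using U(2) MT_perm3[of A B C col g] by auto
  obtain x2 y2 where X2: "x2 \<in> A" "y2 \<in> B" "U2 = {c1, x2, y2}" "col {c1, x2} = g" "col {x2, y2} = g" "col {c1, y2} = g"
    using tri_at[OF gCAB B1(2) U2'] by blast
  obtain x3 y3 where X3: "x3 \<in> A" "y3 \<in> B" "U3 = {c1, x3, y3}" "col {c1, x3} = g" "col {x3, y3} = g" "col {c1, y3} = g"
    using tri_at[OF gCAB B1(2) U3'] by blast
  have T1': "T1 = {c1, a, b1}" using B1(3) by (simp add: insert_commute)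
  have e12: "a \<noteq> x2 \<and> b1 \<noteq> y2"
    by (rule dp[OF gCAB B1(2) a X2(1) B1(1) X2(2)]) (use B1 X2 T1' U in \<open>auto simp: insert_commute\<close>)
  have e13: "a \<noteq> x3 \<and> b1 \<noteq> y3"
    by (rule dp[OF gCAB B1(2) a X3(1) B1(1) X3(2)]) (use B1 X3 T1' U in \<open>auto simp: insert_commute\<close>)
  have e23: "x2 \<noteq> x3 \<and> y2 \<noteq> y3"
    by (rule dp[OF gCAB B1(2) X2(1) X3(1) X2(2) X3(2)]) (use X2 X3 U in \<open>auto simp: insert_commute\<close>)
  have T2b: "T2 \<in> {T \<in> MT A B C col g. b2 \<in> T}" using T(2) B2 by auto
  obtain V where V: "V \<in> {T \<in> MT A B C col g. b2 \<in> T}" "V \<noteq> T2"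
    using card3'[OF all[of b2] T2b] B2(1) by blast
  have V': "V \<in> MT B A C col g" "b2 \<in> V" using V(1) MT_perm1[of A B C col g] by auto
  obtain f h where F: "f \<in> A" "h \<in> C" "V = {b2, f, h}" "col {b2, f} = g" "col {f, h} = g" "col {b2, h} = g"
    using tri_at[OF gBAC B2(1) V'] by blast
  have T2': "T2 = {b2, a, c2}" using B2(3) by (simp add: insert_commute)
  have fa: "a \<noteq> f \<and> c2 \<noteq> h"
    by (rule dp[OF gBAC B2(1) a F(1) B2(2) F(2)]) (use B2 F T2' V in \<open>auto simp: insert_commute\<close>)
  have ah: "col {a, h} \<noteq> g"
  proof
    assume "col {a, h} = g"
    show False
      by (rule S[OF gd a B2(1) F(2) B2(2), of g]) (use fa B2 F \<open>col {a, h} = g\<close> in \<open>auto simp: insert_commute\<close>)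
  qed
  have fc2: "col {f, c2} \<noteq> g"
  proof
    assume "col {f, c2} = g"
    show False
      by (rule S[OF gBCA B2(1) B2(2) F(1) a, of g]) (use fa B2 F \<open>col {f, c2} = g\<close> in \<open>auto simp: insert_commute\<close>)
  qed
  have TLa: "(col {f, b1} = g \<and> col {f, b2} = g \<and> col {f, b3} = g) \<or>
         (col {f, c1} = g \<and> col {f, c2} = g \<and> col {f, c3} = g)"
    by (rule TL[OF gd a F(1) _ B1(1) B2(1) B3(1) _ _ _ B1(2) B2(2) B3(2)])
       (use fa d12 d13 d23 B1 B2 B3 in auto)
  then have fb1: "col {f, b1} = g" using fc2 by auto
  have b1h: "col {b1, h} \<noteq> g"
  proof
    assume "col {b1, h} = g"
    show False
      by (rule S[OF gACB F(1) F(2) B1(1) B2(1), of g]) (use d12 B2 F fb1 \<open>col {b1, h} = g\<close> in \<open>auto simp: insert_commute\<close>)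
  qed
  have hc1: "h \<noteq> c1" using ah B1 by auto
  have TLc: "(col {h, a} = g \<and> col {h, x2} = g \<and> col {h, x3} = g) \<or>
         (col {h, b1} = g \<and> col {h, y2} = g \<and> col {h, y3} = g)"
    by (rule TL[OF gCAB B1(2) F(2) hc1 a X2(1) X3(1) _ _ _ B1(1) X2(2) X3(2)])
       (use e12 e13 e23 B1 X2 X3 in \<open>auto simp: insert_commute\<close>)
  then show False using ah b1h by (auto simp: insert_commute)
qed


lemma MT_I: "a \<in> A \<Longrightarrow> b \<in> B \<Longrightarrow> c \<in> C \<Longrightarrow> col {a, b} = g \<Longrightarrow> col {b, c} = g \<Longrightarrow> col {a, c} = g
   \<Longrightarrow> {a, b, c} \<in> MT A B C col g"
  unfolding MT_def by (rule CollectI, rule exI[of _ a], rule exI[of _ b], rule exI[of _ c]) simp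

lemma MT_E:
  assumes "T \<in> MT A B C col g"
  obtains a b c where "T = {a, b, c}" "a \<in> A" "b \<in> B" "c \<in> C" "col {a, b} = g" "col {b, c} = g" "col {a, c} = g"
  using assms unfolding MT_def by blast

lemma mono_I: "a \<in> A \<Longrightarrow> b \<in> B \<Longrightarrow> c \<in> C \<Longrightarrow> col {a, b} = col {b, c} \<Longrightarrow> col {b, c} = col {a, c}
   \<Longrightarrow> {a, b, c} \<in> mono_triangles A B C col"
  unfolding mono_triangles_def by (rule CollectI, rule exI[of _ a], rule exI[of _ b], rule exI[of _ c]) simp

lemma mono_E:
  assumes "T \<in> mono_triangles A B C col"
  obtains a b c where "T = {a, b, c}" "a \<in> A" "b \<in> B" "c \<in> C" "col {a, b} = col {b, c}" "col {b, c} = col {a, c}"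
  using assms unfolding mono_triangles_def by blast

lemma MT_sub: "MT A B C col g \<subseteq> (\<lambda>(a, b, c). {a, b, c}) ` (A \<times> B \<times> C)"
proof
  fix T assume "T \<in> MT A B C col g"
  then obtain a b c where "T = {a, b, c}" "a \<in> A" "b \<in> B" "c \<in> C" by (rule MT_E)
  then show "T \<in> (\<lambda>(a, b, c). {a, b, c}) ` (A \<times> B \<times> C)"
    by (intro image_eqI[of _ _ "(a, b, c)"]) auto
qed

lemma MT_finite: "finite A \<Longrightarrow> finite B \<Longrightarrow> finite C \<Longrightarrow> finite (MT A B C col g)"
  by (rule finite_subset[OF MT_sub]) auto

lemma MT_card: "finite A \<Longrightarrow> finite B \<Longrightarrow> finite C \<Longrightarrow> card (MT A B C col g) \<le> card A * card B * card C"
proof -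
  assume f: "finite A" "finite B" "finite C"
  have "card (MT A B C col g) \<le> card ((\<lambda>(a, b, c). {a, b, c}) ` (A \<times> B \<times> C))"
    by (rule card_mono[OF _ MT_sub]) (use f in auto)
  also have "\<dots> \<le> card (A \<times> B \<times> C)" by (rule card_image_le) (use f in auto)
  also have "\<dots> = card A * card B * card C" by (simp add: card_cartesian_product)
  finally show ?thesis .
qed

lemma MT_remove: "MT (A - {v}) (B - {v}) (C - {v}) col g = {T \<in> MT A B C col g. v \<notin> T}"
proof (rule set_eqI, rule iffI)
  fix T assume "T \<in> MT (A - {v}) (B - {v}) (C - {v}) col g"
  then obtain a b c where h: "T = {a, b, c}" "a \<in> A - {v}" "b \<in> B - {v}" "c \<in> C - {v}"
    "col {a, b} = g" "col {b, c} = g" "col {a, c} = g" by (rule MT_E)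
  have "T \<in> MT A B C col g" unfolding h(1) by (rule MT_I) (use h in auto)
  moreover have "v \<notin> T" using h by auto
  ultimately show "T \<in> {T \<in> MT A B C col g. v \<notin> T}" by simp
next
  fix T assume "T \<in> {T \<in> MT A B C col g. v \<notin> T}"
  then have T: "T \<in> MT A B C col g" "v \<notin> T" by auto
  then obtain a b c where h: "T = {a, b, c}" "a \<in> A" "b \<in> B" "c \<in> C"
    "col {a, b} = g" "col {b, c} = g" "col {a, c} = g" by (elim MT_E)
  show "T \<in> MT (A - {v}) (B - {v}) (C - {v}) col g" unfolding h(1) by (rule MT_I) (use h T(2) in auto)
qed

lemma MT_empty: "A = {} \<or> B = {} \<or> C = {} \<Longrightarrow> MT A B C col g = {}"
  by (auto elim: MT_E)

lemma mono_sub: "A' \<subseteq> A \<Longrightarrow> B' \<subseteq> B \<Longrightarrow> C' \<subseteq> C \<Longrightarrow> mono_triangles A' B' C' col \<subseteq> mono_triangles A B C col"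
proof
  fix T assume s: "A' \<subseteq> A" "B' \<subseteq> B" "C' \<subseteq> C" and "T \<in> mono_triangles A' B' C' col"
  then obtain a b c where h: "T = {a, b, c}" "a \<in> A'" "b \<in> B'" "c \<in> C'"
    "col {a, b} = col {b, c}" "col {b, c} = col {a, c}" by (elim mono_E)
  show "T \<in> mono_triangles A B C col" unfolding h(1) by (rule mono_I) (use h s in auto)
qed

lemma good_sub:
  assumes "A' \<subseteq> A" "B' \<subseteq> B" "C' \<subseteq> C" "good_colouring A B C col"
  shows "good_colouring A' B' C' col"
proof -
  have m: "mono_triangles A' B' C' col \<subseteq> mono_triangles A B C col" using mono_sub assms(1-3) .
  show ?thesis unfolding good_colouring_def
  proof (intro ballI impI)
    fix T1 T2 assume "T1 \<in> mono_triangles A' B' C' col" "T2 \<in> mono_triangles A' B' C' col" "T1 \<noteq> T2"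
    then show "\<not> (\<exists>e. e \<subseteq> T1 \<and> e \<subseteq> T2 \<and> card e = 2)"
      using assms(4) m unfolding good_colouring_def by (meson subsetD)
  qed
qed

lemma card_split: "finite S \<Longrightarrow> card S = card {x \<in> S. P x} + card {x \<in> S. \<not> P x}"
proof -
  assume f: "finite S"
  have "S = {x \<in> S. P x} \<union> {x \<in> S. \<not> P x}" by blast
  then have "card S = card ({x \<in> S. P x} \<union> {x \<in> S. \<not> P x})" by simp
  also have "\<dots> = card {x \<in> S. P x} + card {x \<in> S. \<not> P x}"
    by (rule card_Un_disjoint) (use f in auto)
  finally show ?thesis .
qed

lemma bound:
  assumes "finite A" "finite B" "finite C" "gd A B C col" "A \<noteq> {}" "B \<noteq> {}" "C \<noteq> {}"
  shows "card (MT A B C col g) + 5 \<le> 2 * card (A \<union> B \<union> C)"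
  using assms
proof (induction "card (A \<union> B \<union> C)" arbitrary: A B C rule: less_induct)
  case less
  have dj: "A \<inter> B = {}" "B \<inter> C = {}" "A \<inter> C = {}" using less.prems(4) unfolding gd_def by auto
  have cu: "card (A \<union> B \<union> C) = card A + card B + card C"
  proof -
    have "card (A \<union> B \<union> C) = card (A \<union> B) + card C"
      by (rule card_Un_disjoint) (use less.prems dj in auto)
    also have "card (A \<union> B) = card A + card B"
      by (rule card_Un_disjoint) (use less.prems dj in auto)
    finally show ?thesis .
  qed
  have cA: "card A \<ge> 1" "card B \<ge> 1" "card C \<ge> 1"
    using less.prems(1-3,5-7) by (simp_all add: Suc_le_eq card_gt_0_iff)
  have fin: "finite (MT A B C col g)" using MT_finite less.prems by blast
  show ?case
  proof (cases "card A = 1 \<and> card B = 1 \<and> card C = 1")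
    case True
    then have "card (MT A B C col g) \<le> 1" using MT_card[of A B C col g] less.prems by simp
    then show ?thesis using cu True by simp
  next
    case False
    then have n4: "card (A \<union> B \<union> C) \<ge> 4" using cu cA by auto
    obtain a where a: "a \<in> A" using less.prems by blast
    have "\<exists>v \<in> A \<union> B \<union> C. card {T \<in> MT A B C col g. v \<in> T} \<le> 2"
    proof (rule ccontr)
      assume H: "\<not> ?thesis"
      have "3 \<le> card {T \<in> MT A B C col g. v \<in> T}" if "v \<in> A \<union> B \<union> C" for v
      proof -
        from H that have "\<not> card {T \<in> MT A B C col g. v \<in> T} \<le> 2" by blast
        then show ?thesis by linarith
      qed
      then show False using core[OF less.prems(4) a] by blast
    qed
    then obtain v where v: "v \<in> A \<union> B \<union> C" "card {T \<in> MT A B C col g. v \<in> T} \<le> 2" by blast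
    have split: "card (MT A B C col g) = card {T \<in> MT A B C col g. v \<in> T} + card (MT (A - {v}) (B - {v}) (C - {v}) col g)"
      using card_split[OF fin, of "\<lambda>T. v \<in> T"] by (simp add: MT_remove)
    show ?thesis
    proof (cases "A - {v} \<noteq> {} \<and> B - {v} \<noteq> {} \<and> C - {v} \<noteq> {}")
      case True
      have un: "(A - {v}) \<union> (B - {v}) \<union> (C - {v}) = (A \<union> B \<union> C) - {v}" by blast
      have cless: "card ((A - {v}) \<union> (B - {v}) \<union> (C - {v})) = card (A \<union> B \<union> C) - 1"
        using un v(1) less.prems(1-3) by (simp add: card_Diff_singleton)
      have gd': "gd (A - {v}) (B - {v}) (C - {v}) col"
      proof -
        have "good_colouring (A - {v}) (B - {v}) (C - {v}) col"
          by (rule good_sub[of "A - {v}" A "B - {v}" B "C - {v}" C col]) (use less.prems(4) in \<open>auto simp: gd_def\<close>)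
        moreover have "(A - {v}) \<inter> (B - {v}) = {}" using dj(1) by blast
        moreover have "(B - {v}) \<inter> (C - {v}) = {}" using dj(2) by blast
        moreover have "(A - {v}) \<inter> (C - {v}) = {}" using dj(3) by blast
        ultimately show ?thesis unfolding gd_def by simp
      qed
      have IH: "card (MT (A - {v}) (B - {v}) (C - {v}) col g) + 5 \<le> 2 * card ((A - {v}) \<union> (B - {v}) \<union> (C - {v}))"
      proof (rule less.hyps)
        show "card ((A - {v}) \<union> (B - {v}) \<union> (C - {v})) < card (A \<union> B \<union> C)"
          using cless n4 by simp
        show "finite (A - {v})" "finite (B - {v})" "finite (C - {v})" using less.prems(1-3) by simp_all
        show "gd (A - {v}) (B - {v}) (C - {v}) col" by (rule gd')
        show "A - {v} \<noteq> {}" "B - {v} \<noteq> {}" "C - {v} \<noteq> {}" using True by simp_all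
      qed
      show ?thesis using IH split v(2) cless n4 by linarith
    next
      case False
      then have "MT (A - {v}) (B - {v}) (C - {v}) col g = {}" using MT_empty by blast
      then show ?thesis using split v(2) n4 by simp
    qed
  qed
qed

theorem lemma6p1:
  fixes n :: nat
  assumes "n \<ge> 3"
  shows "gamma n \<le> 4 * n - 10"
proof -
  define SS where "SS = {card (mono_triangles A B C col) | A B C col.
                    tripartition n A B C \<and> good_colouring A B C col}"
  have bnd: "x \<le> 4 * n - 10" if "x \<in> SS" for x
  proof -
    obtain A B C col where x: "x = card (mono_triangles A B C col)" and tp: "tripartition n A B C"
      and gc: "good_colouring A B C col"
      using \<open>x \<in> SS\<close> unfolding SS_def by blast
    have U: "A \<union> B \<union> C = {0..<n}" and dj: "A \<inter> B = {}" "B \<inter> C = {}" "A \<inter> C = {}"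
      and ne: "A \<noteq> {}" "B \<noteq> {}" "C \<noteq> {}"
      using tp unfolding tripartition_def by auto
    have f: "finite A" "finite B" "finite C" using U by (metis finite_Un finite_atLeastLessThan)+
    have gd: "gd A B C col" using dj gc unfolding gd_def by blast
    have b1: "card (MT A B C col True) + 5 \<le> 2 * n"
      using bound[OF f gd ne, of True] U by simp
    have b2: "card (MT A B C col False) + 5 \<le> 2 * n"
      using bound[OF f gd ne, of False] U by simp
    have "x \<le> card (MT A B C col True) + card (MT A B C col False)"
      unfolding x mono_eq by (rule card_Un_le)
    then show ?thesis using b1 b2 by linarith
  qed
  have ne: "SS \<noteq> {}"
  proof -
    define col :: "nat set \<Rightarrow> bool" where "col = (\<lambda>e. e = {0, 1})"
    have tp: "tripartition n {0} {1} {2..<n}"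
      unfolding tripartition_def using assms by auto
    have "mono_triangles {0} {1} {2..<n} col = {}"
    proof -
      have "\<not> (col {a, b} = col {b, c} \<and> col {b, c} = col {a, c})"
        if "a \<in> {0}" "b \<in> {1}" "c \<in> {2..<n}" for a b c :: nat
      proof -
        have "col {a, b}" using that unfolding col_def by auto
        moreover have "\<not> col {b, c}"
        proof
          assume "col {b, c}"
          then have "{b, c} = {0, 1}" unfolding col_def by simp
          then have "(0::nat) \<in> {b, c}" by blast
          then show False using that by auto
        qed
        ultimately show ?thesis by blast
      qed
      then show ?thesis unfolding mono_triangles_def by blast
    qed
    then have "good_colouring {0} {1} {2..<n} col" unfolding good_colouring_def by simp
    then have "card (mono_triangles {0} {1} {2..<n} col) \<in> SS" unfolding SS_def using tp by blast
    then show ?thesis by blast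
  qed
  have fin: "finite SS"
    by (rule finite_subset[of SS "{..4 * n - 10}"]) (use bnd in auto)
  have "Max SS \<le> 4 * n - 10"
    by (rule Max.boundedI[OF fin ne]) (use bnd in auto)
  then show ?thesis unfolding gamma_def SS_def .
qed

end
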